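(* Let $n\ge2$, $\delta>0$, $d_0>0$, and $f,g:\mathbb{R}^3\to\mathbb{R}$ sufficiently smooth. Consider the $n$-patch model with identical diffusion rates, for $j\in\Omega=\{1,\dots,n\}$, $$\dot u_j=\delta d_0\sum_{i\in\Omega}(u_i-u_j)+f(u_j,v_j,\alpha),\qquad \dot v_j=\delta d_0\sum_{i\in\Omega}(v_i-v_j)+g(u_j,v_j,\alpha)$$ (i.e. the model with $\delta\sum_i(d_{11}(u_i-u_j)+d_{12}(v_i-v_j))$ and $\delta\sum_i(d_{21}(u_i-u_j)+d_{22}(v_i-v_j))$ where $d_{11}=d_{22}=d_0$, $d_{12}=d_{21}=0$). Suppose the kinetic system $\dot u=f(u,v,\alpha_0)$, $\dot v=g(u,v,\alpha_0)$ has a stable periodic solution $\psi(t)=(u_0(t),v_0(t))$ with minimum period $p>0$ whose Floquet multipliers are $\gamma=1$ and $\tilde\gamma\in(0,1)$. Then, with $\alpha=\alpha_0$, for sufficiently small $\delta>0$ the synchronous periodic solution $(\psi(t),\dots,\psi(t))^T$ is stable with respect to the patch model. *)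

theory Defs
  imports "HOL-Analysis.Analysis" "HOL-Computational_Algebra.Polynomial"
begin

definition C1_fun3 :: "(real \<Rightarrow> real \<Rightarrow> real \<Rightarrow> real) \<Rightarrow> bool" where
  "C1_fun3 h \<longleftrightarrow> (\<exists>D :: real^3 \<Rightarrow> ((real^3) \<Rightarrow>\<^sub>L real).
      (\<forall>x. ((\<lambda>y. h (y$1) (y$2) (y$3)) has_derivative blinfun_apply (D x)) (at x))
      \<and> continuous_on UNIV D)"

definition kinetic_field ::
  "(real \<Rightarrow> real \<Rightarrow> real \<Rightarrow> real) \<Rightarrow> (real \<Rightarrow> real \<Rightarrow> real \<Rightarrow> real) \<Rightarrow> real \<Rightarrow> real^2 \<Rightarrow> real^2" where
  "kinetic_field f g \<alpha> x = vector [f (x$1) (x$2) \<alpha>, g (x$1) (x$2) \<alpha>]"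

text \<open>n-patch model with identical diffusion rates d11 = d22 = d0, d12 = d21 = 0.
  Patches are the elements of the finite type 'n; state component (j,1) is u_j, (j,2) is v_j.\<close>
definition patch_field ::
  "real \<Rightarrow> real \<Rightarrow> (real \<Rightarrow> real \<Rightarrow> real \<Rightarrow> real) \<Rightarrow> (real \<Rightarrow> real \<Rightarrow> real \<Rightarrow> real) \<Rightarrow> real
    \<Rightarrow> real^('n::finite \<times> 2) \<Rightarrow> real^('n \<times> 2)" where
  "patch_field \<delta> d0 f g \<alpha> x = (\<chi> jk. let j = fst jk; k = snd jk in
     (if k = 1
      then \<delta> * d0 * (\<Sum>i\<in>UNIV. x$(i,1) - x$(j,1)) + f (x$(j,1)) (x$(j,2)) \<alpha>
      else \<delta> * d0 * (\<Sum>i\<in>UNIV. x$(i,2) - x$(j,2)) + g (x$(j,1)) (x$(j,2)) \<alpha>))"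

definition synchronous :: "(real \<Rightarrow> real^2) \<Rightarrow> real \<Rightarrow> real^('n::finite \<times> 2)" where
  "synchronous \<psi> t = (\<chi> jk. \<psi> t $ snd jk)"

definition periodic_solution :: "('a::euclidean_space \<Rightarrow> 'a) \<Rightarrow> (real \<Rightarrow> 'a) \<Rightarrow> real \<Rightarrow> bool" where
  "periodic_solution F \<psi> p \<longleftrightarrow>
     p > 0 \<and> (\<forall>t. (\<psi> has_vector_derivative F (\<psi> t)) (at t))
     \<and> (\<forall>t. \<psi> (t + p) = \<psi> t)
     \<and> (\<forall>q. 0 < q \<and> q < p \<longrightarrow> \<not> (\<forall>t. \<psi> (t + q) = \<psi> t))"

definition fundamental_matrix ::
  "(real^'m \<Rightarrow> real^'m) \<Rightarrow> (real \<Rightarrow> real^'m) \<Rightarrow> (real \<Rightarrow> real^'m^'m) \<Rightarrow> bool" where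
  "fundamental_matrix F \<psi> \<Phi> \<longleftrightarrow>
     \<Phi> 0 = mat 1 \<and>
     (\<forall>t. (\<Phi> has_vector_derivative (matrix (frechet_derivative F (at (\<psi> t))) ** \<Phi> t)) (at t))"

definition char_det :: "real^'m^'m \<Rightarrow> complex \<Rightarrow> complex" where
  "char_det M z = det ((\<chi> i j. (if i = j then z else 0) - complex_of_real (M$i$j)) :: complex^'m^'m)"

text \<open>The Floquet multipliers (roots of the characteristic polynomial of the monodromy
  matrix Phi(p), with algebraic multiplicity) are given by the roots of P.\<close>
definition floquet_char ::
  "(real^'m \<Rightarrow> real^'m) \<Rightarrow> (real \<Rightarrow> real^'m) \<Rightarrow> real \<Rightarrow> (complex \<Rightarrow> complex) \<Rightarrow> bool" where
  "floquet_char F \<psi> p P \<longleftrightarrow>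
     (\<exists>\<Phi>. fundamental_matrix F \<psi> \<Phi> \<and> (\<forall>z. char_det (\<Phi> p) z = P z))"

definition floquet_stable :: "(real^'m \<Rightarrow> real^'m) \<Rightarrow> (real \<Rightarrow> real^'m) \<Rightarrow> real \<Rightarrow> bool" where
  "floquet_stable F \<psi> p \<longleftrightarrow>
     (\<exists>q :: complex poly. floquet_char F \<psi> p (\<lambda>z. (z - 1) * poly q z)
        \<and> (\<forall>z. poly q z = 0 \<longrightarrow> cmod z < 1))"

end

theory Submission
  imports Defs
begin


lemma has_derivative_vec_lambda:
  fixes f :: "'a::real_normed_vector \<Rightarrow> 'i::finite \<Rightarrow> 'b::real_normed_vector"
  assumes d: "\<And>i. ((\<lambda>x. f x i) has_derivative (\<lambda>h. f' h i)) F"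
  shows "((\<lambda>x. \<chi> i. f x i) has_derivative (\<lambda>h. \<chi> i. f' h i)) F"
proof -
  have bl: "\<And>i. bounded_linear (\<lambda>h. f' h i)" using d has_derivative_bounded_linear by blast
  have "\<forall>i. \<exists>K. \<forall>x. norm (f' x i) \<le> norm x * K"
    using bl bounded_linear.bounded by blast
  then obtain K where K: "\<And>i x. norm (f' x i) \<le> norm x * K i" by metis
  have BL: "bounded_linear (\<lambda>h. \<chi> i. f' h i)"
  proof (rule bounded_linear_intro[where K="sum K UNIV"])
    fix x y show "(\<chi> i. f' (x + y) i) = (\<chi> i. f' x i) + (\<chi> i. f' y i)"
      by (simp add: vec_eq_iff linear_add[OF bounded_linear.linear[OF bl]])
  next
    fix r x show "(\<chi> i. f' (r *\<^sub>R x) i) = r *\<^sub>R (\<chi> i. f' x i)"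
      by (simp add: vec_eq_iff linear_scale[OF bounded_linear.linear[OF bl]])
  next
    fix x
    have "norm (\<chi> i. f' x i) \<le> (\<Sum>i\<in>UNIV. norm (f' x i))"
      unfolding norm_vec_def by (rule order_trans[OF L2_set_le_sum]) auto
    also have "\<dots> \<le> (\<Sum>i\<in>UNIV. norm x * K i)" by (rule sum_mono) (rule K)
    finally show "norm (\<chi> i. f' x i) \<le> norm x * sum K UNIV" by (simp add: sum_distrib_left)
  qed
  have lim: "\<And>i. ((\<lambda>y. ((f y i - f (Lim F (\<lambda>x. x)) i) - f' (y - Lim F (\<lambda>x. x)) i) /\<^sub>R norm (y - Lim F (\<lambda>x. x))) \<longlongrightarrow> 0) F"
    using d unfolding has_derivative_def by blast
  define L where "L = Lim F (\<lambda>x. x)"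
  have T: "((\<lambda>y. \<chi> i. ((f y i - f L i) - f' (y - L) i) /\<^sub>R norm (y - L)) \<longlongrightarrow> (\<chi> i. 0)) F"
    by (rule tendsto_vec_lambda) (use lim in \<open>simp add: L_def\<close>)
  have z: "(\<chi> i. (0::'b)) = 0" by (simp add: vec_eq_iff)
  have eq: "(\<lambda>y. ((\<chi> i. f y i) - (\<chi> i. f L i) - (\<chi> i. f' (y - L) i)) /\<^sub>R norm (y - L))
     = (\<lambda>y. \<chi> i. ((f y i - f L i) - f' (y - L) i) /\<^sub>R norm (y - L))"
    by (simp add: fun_eq_iff vec_eq_iff)
  show ?thesis unfolding has_derivative_def L_def[symmetric]
    using BL T unfolding z eq by blast
qed

definition kron :: "'a::times^'n^'n \<Rightarrow> 'a^'m^'m \<Rightarrow> 'a^('n\<times>'m)^('n\<times>'m)" where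
  "kron A B = (\<chi> r c. A$fst r$fst c * B$snd r$snd c)"

lemma kron_mult:
  fixes A C :: "'a::comm_semiring_1^'n^'n" and B D :: "'a^'m^'m"
  shows "kron A B ** kron C D = kron (A ** C) (B ** D)"
proof -
  have "(\<Sum>x\<in>UNIV. A$j$fst x * B$k$snd x * (C$fst x$i * D$snd x$l))
     = (\<Sum>j'\<in>UNIV. A$j$j' * C$j'$i) * (\<Sum>k'\<in>UNIV. B$k$k' * D$k'$l)" for j k i l
  proof -
    have "(\<Sum>x\<in>UNIV. A$j$fst x * B$k$snd x * (C$fst x$i * D$snd x$l))
        = (\<Sum>x\<in>UNIV \<times> UNIV. A$j$fst x * B$k$snd x * (C$fst x$i * D$snd x$l))"
      by (simp only: UNIV_Times_UNIV)
    also have "\<dots> = (\<Sum>j'\<in>UNIV. \<Sum>k'\<in>UNIV. A$j$j' * B$k$k' * (C$j'$i * D$k'$l))"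
      by (subst sum.cartesian_product) (simp add: case_prod_beta)
    also have "\<dots> = (\<Sum>j'\<in>UNIV. \<Sum>k'\<in>UNIV. (A$j$j' * C$j'$i) * (B$k$k' * D$k'$l))"
      by (intro sum.cong refl) (simp only: mult_ac)
    also have "\<dots> = (\<Sum>j'\<in>UNIV. A$j$j' * C$j'$i) * (\<Sum>k'\<in>UNIV. B$k$k' * D$k'$l)"
      by (simp only: sum_product)
    finally show ?thesis .
  qed
  then show ?thesis
    unfolding kron_def matrix_matrix_mult_def by (simp add: vec_eq_iff)
qed

lemma kron_one: "kron (mat 1) (mat 1) = (mat 1 :: 'a::semiring_1^('n::finite\<times>'m::finite)^('n\<times>'m))"
proof -
  have "(if fst r = fst c then 1 else 0) * (if snd r = snd c then 1 else (0::'a)) = (if r = c then 1 else 0)"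
    for r c :: "'n \<times> 'm" by (cases r; cases c) auto
  then show ?thesis unfolding kron_def mat_def by (simp add: vec_eq_iff)
qed

lemma det_triangular_rank:
  fixes A :: "'a::comm_ring_1^'n^'n" and r :: "'n \<Rightarrow> nat"
  assumes inj: "inj r" and z: "\<And>i j. r j < r i \<Longrightarrow> A$i$j = 0"
  shows "det A = prod (\<lambda>i. A$i$i) UNIV"
proof -
  let ?U = "UNIV:: 'n set"
  let ?PU = "{p. p permutes ?U}"
  let ?pp = "\<lambda>p. of_int (sign p) * prod (\<lambda>i. A$i$p i) (UNIV :: 'n set)"
  have id0: "{id} \<subseteq> ?PU" by (auto simp: permutes_id)
  have p0: "\<forall>p \<in> ?PU - {id}. ?pp p = 0"
  proof
    fix p assume p: "p \<in> ?PU - {id}"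
    then have pp: "p permutes ?U" and pid: "p \<noteq> id" by auto
    have "\<exists>i. r (p i) < r i"
    proof (rule ccontr)
      assume "\<not> ?thesis"
      then have le: "\<And>i. r i \<le> r (p i)" by (simp add: not_less)
      have "sum (\<lambda>i. r (p i)) ?U = sum r ?U"
        using sum.permute[OF pp, of r] unfolding comp_def by (rule sym)
      then have "\<forall>i\<in>?U. r i = r (p i)"
        using sum_mono_inv[of r ?U "\<lambda>i. r (p i)"] le by (metis finite_class.finite_UNIV)
      then have "p = id" using inj by (auto simp: inj_def fun_eq_iff)
      with pid show False by simp
    qed
    then obtain i where "r (p i) < r i" by blast
    then have "A$i$p i = 0" by (rule z)
    then have "prod (\<lambda>i. A$i$p i) ?U = 0" by (intro prod_zero) auto
    then show "?pp p = 0" by simp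
  qed
  from sum.mono_neutral_cong_left[OF finite_permutations[OF finite_class.finite_UNIV] id0 p0] show ?thesis
    unfolding det_def by (simp add: sign_id)
qed



lemma det_similar:
  fixes X Y P Pi :: "complex^'k^'k"
  assumes "X ** P = P ** Y" "Pi ** P = mat 1"
  shows "det X = det Y"
proof -
  have "det Pi * det P = 1" using det_mul[of Pi P] assms(2) by simp
  then have "det P \<noteq> 0" by auto
  moreover have "det X * det P = det P * det Y" by (metis assms(1) det_mul)
  ultimately show ?thesis by simp
qed

definition cm :: "real^'k^'j \<Rightarrow> complex^'k^'j" where
  "cm M = (\<chi> i j. complex_of_real (M$i$j))"

lemma char_det_cm: "char_det M z = det (mat z - cm M)"
  unfolding char_det_def cm_def mat_def by (rule arg_cong[where f=det]) (simp add: vec_eq_iff)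

lemma mat_mult_left: "(mat z ** P) $ i $ j = z * P$i$j" for P :: "'a::semiring_1^'k^'k::finite"
proof -
  have "(\<Sum>k\<in>UNIV. (if i = k then z else 0) * P$k$j) = (\<Sum>k\<in>UNIV. if k = i then z * P$k$j else 0)"
    by (rule sum.cong) auto
  then show ?thesis by (simp add: matrix_matrix_mult_def mat_def)
qed

lemma mat_mult_right: "(P ** mat z) $ i $ j = P$i$j * z" for P :: "'a::semiring_1^'k::finite^'k"
proof -
  have "(\<Sum>k\<in>UNIV. P$i$k * (if k = j then z else 0)) = (\<Sum>k\<in>UNIV. if k = j then P$i$k * z else 0)"
    by (rule sum.cong) auto
  then show ?thesis by (simp add: matrix_matrix_mult_def mat_def)
qed

lemma mat_sub_comm:
  fixes M P M' :: "'a::comm_ring_1^'k^'k"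
  assumes "M ** P = P ** M'"
  shows "(mat z - M) ** P = P ** (mat z - M')"
proof -
  have "(mat z - M) ** P = mat z ** P - M ** P"
    by (simp add: matrix_matrix_mult_def vec_eq_iff left_diff_distrib sum_subtractf)
  also have "\<dots> = P ** mat z - P ** M'"
    using assms by (simp add: vec_eq_iff mat_mult_left mat_mult_right mult.commute)
  also have "\<dots> = P ** (mat z - M')"
    by (simp add: matrix_matrix_mult_def vec_eq_iff right_diff_distrib sum_subtractf)
  finally show ?thesis .
qed

lemma cm_kron: "cm (kron A B) = kron (cm A) (cm B)"
  by (simp add: cm_def kron_def vec_eq_iff)



lemma sum_Q_left:
  fixes j0 j :: "'n::finite" and f :: "'n \<Rightarrow> 'a::comm_ring_1"
  shows "(\<Sum>m\<in>UNIV. ((if m = j0 then 1 else 0) + (if j \<noteq> j0 \<and> m = j then 1 else 0)) * f m)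
     = f j0 + (if j \<noteq> j0 then f j else 0)"
proof (cases "j = j0")
  case True
  then have "(\<Sum>m\<in>UNIV. ((if m = j0 then 1 else 0) + (if j \<noteq> j0 \<and> m = j then 1 else 0)) * f m)
      = (\<Sum>m\<in>UNIV. if m = j0 then f m else 0)" by (intro sum.cong) auto
  then show ?thesis using True by simp
next
  case False
  then have "(\<Sum>m\<in>UNIV. ((if m = j0 then 1 else 0) + (if j \<noteq> j0 \<and> m = j then 1 else 0)) * f m)
      = (\<Sum>m\<in>UNIV. (if m = j0 then f m else 0) + (if m = j then f m else 0))" by (intro sum.cong) auto
  then show ?thesis using False by (simp add: sum.distrib)
qed

lemma sum_Q_right:
  fixes j0 i :: "'n::finite" and f :: "'n \<Rightarrow> 'a::comm_ring_1"
  shows "(\<Sum>m\<in>UNIV. f m * ((if i = j0 then 1 else 0) + (if m \<noteq> j0 \<and> i = m then 1 else 0)))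
     = (if i = j0 then sum f UNIV else f i)"
proof (cases "i = j0")
  case True
  then have "(\<Sum>m\<in>UNIV. f m * ((if i = j0 then 1 else 0) + (if m \<noteq> j0 \<and> i = m then 1 else 0)))
      = (\<Sum>m\<in>UNIV. f m)" by (intro sum.cong) auto
  then show ?thesis using True by simp
next
  case False
  then have "(\<Sum>m\<in>UNIV. f m * ((if i = j0 then 1 else 0) + (if m \<noteq> j0 \<and> i = m then 1 else 0)))
      = (\<Sum>m\<in>UNIV. if m = i then f m else 0)" by (intro sum.cong) auto
  then show ?thesis using False by simp
qed

definition Qm :: "'n \<Rightarrow> 'a::comm_ring_1^'n::finite^'n" where
  "Qm j0 = (\<chi> j m. (if m = j0 then 1 else 0) + (if j \<noteq> j0 \<and> m = j then 1 else 0))"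
definition Qim :: "'n \<Rightarrow> 'a::comm_ring_1^'n::finite^'n" where
  "Qim j0 = (\<chi> j m. (if m = j0 then (if j = j0 then 1 else -1) else 0) + (if j \<noteq> j0 \<and> m = j then 1 else 0))"

lemma Q_inv: "Qim j0 ** Qm j0 = (mat 1 :: 'a::comm_ring_1^'n::finite^'n)"
proof -
  have "(\<Sum>m\<in>UNIV. ((if m = j0 then (if j = j0 then 1 else -1) else 0) + (if j \<noteq> j0 \<and> m = j then 1 else 0))
          * ((if i = j0 then 1 else 0) + (if m \<noteq> j0 \<and> i = m then 1 else (0::'a))))
        = (if j = i then 1 else 0)" for i j :: 'n
    by (subst sum_Q_right) (auto simp: sum.distrib)
  then show ?thesis unfolding Qm_def Qim_def matrix_matrix_mult_def mat_def by (simp add: vec_eq_iff)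
qed

lemma Q_sim:
  fixes j0 :: "'n::finite" and a b :: "'a::comm_ring_1"
  defines "T \<equiv> (\<chi> j i. a * (if j = i then 1 else 0) + (if j = j0 then (if i = j0 then of_nat CARD('n) * b else b) else 0)) :: 'a^'n^'n"
  defines "E \<equiv> (\<chi> j i. a * (if j = i then 1 else 0) + b) :: 'a^'n^'n"
  shows "E ** Qm j0 = Qm j0 ** T"
proof -
  have L: "(\<Sum>m\<in>UNIV. (a * (if j = m then 1 else 0) + b) * ((if i = j0 then 1 else 0) + (if m \<noteq> j0 \<and> i = m then 1 else 0)))
     = (if i = j0 then a + of_nat CARD('n) * b else a * (if j = i then 1 else 0) + b)" for i j :: 'n
    by (subst sum_Q_right) (simp add: sum.distrib flip: sum_distrib_left)
  have R: "(\<Sum>m\<in>UNIV. ((if m = j0 then 1 else 0) + (if j \<noteq> j0 \<and> m = j then 1 else 0)) * T$m$i)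
     = (if i = j0 then a + of_nat CARD('n) * b else a * (if j = i then 1 else 0) + b)" for i j :: 'n
    by (subst sum_Q_left) (auto simp: T_def)
  show ?thesis unfolding matrix_matrix_mult_def Qm_def
    using L R by (simp add: vec_eq_iff E_def)
qed


lemma tri2:
  fixes F :: "complex^2^2" and g :: complex
  assumes tr: "F$1$1 + F$2$2 = 1 + g" and dt: "F$1$1 * F$2$2 - F$1$2 * F$2$1 = g"
  shows "\<exists>(S::complex^2^2) (Si::complex^2^2) (D::complex^2^2). F ** S = S ** D \<and> Si ** S = mat 1 \<and> D$2$1 = 0 \<and> D$1$1 + D$2$2 = 1 + g \<and> D$1$1 * D$2$2 = g"
proof (cases "F$2$1 = 0")
  case True
  show ?thesis
    by (rule exI[of _ "mat 1"], rule exI[of _ "mat 1"], rule exI[of _ F]) (use True tr dt in simp)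
next
  case False
  define S :: "complex^2^2" where "S = vector [vector [1 - F$2$2, 1], vector [F$2$1, 0]]"
  define Si :: "complex^2^2" where "Si = vector [vector [0, 1 / F$2$1], vector [1, - (1 - F$2$2) / F$2$1]]"
  define D :: "complex^2^2" where "D = vector [vector [1, 1], vector [0, g]]"
  have "F ** S = S ** D"
    unfolding S_def D_def matrix_matrix_mult_def
    using tr dt by (simp add: vec_eq_iff forall_2 sum_2 algebra_simps)
  moreover have "Si ** S = mat 1"
    unfolding S_def Si_def matrix_matrix_mult_def mat_def
    using False by (simp add: vec_eq_iff forall_2 sum_2 field_simps)
  moreover have "D$2$1 = 0 \<and> D$1$1 + D$2$2 = 1 + g \<and> D$1$1 * D$2$2 = g" by (simp add: D_def)
  ultimately show ?thesis by blast
qed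

lemma char_det_kron:
  fixes E :: "real^'n::finite^'n" and F :: "real^2^2" and a g :: real
  assumes E: "E = (\<chi> j i. a * (if j = i then 1 else 0) + (1 - a) / real CARD('n))"
    and F: "\<And>z. char_det F z = (z - 1) * (z - complex_of_real g)"
  shows "char_det (kron E F) z = (z - 1) * (z - complex_of_real g) *
           ((z - complex_of_real a)^(CARD('n) - 1) * (z - complex_of_real (a*g))^(CARD('n) - 1))"
proof -
  let ?N = "CARD('n)"
  define ac where "ac = complex_of_real a"
  define bc where "bc = complex_of_real ((1-a)/?N)"
  define gc where "gc = complex_of_real g"
  have cmE: "cm E = (\<chi> j i. ac * (if j = i then 1 else 0) + bc)"
    by (simp add: E cm_def ac_def bc_def vec_eq_iff)
  define Fc where "Fc = cm F"
  have Fz: "(z - Fc$1$1) * (z - Fc$2$2) - Fc$1$2 * Fc$2$1 = (z-1)*(z-gc)" for z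
    using F[of z] unfolding char_det_cm det_2 Fc_def gc_def by (simp add: mat_def)
  have dt: "Fc$1$1 * Fc$2$2 - Fc$1$2 * Fc$2$1 = gc" using Fz[of 0] by simp
  have tr: "Fc$1$1 + Fc$2$2 = 1 + gc" using Fz[of 1] dt by (simp add: algebra_simps)
  obtain S Si D :: "complex^2^2" where SD: "Fc ** S = S ** D" "Si ** S = mat 1" "D$2$1 = 0"
    "D$1$1 + D$2$2 = 1 + gc" "D$1$1 * D$2$2 = gc"
    using tri2[OF tr dt] by blast
  obtain h where hb: "bij_betw h (UNIV::'n set) {0..<?N}"
    using ex_bij_betw_finite_nat[of "UNIV::'n set"] by auto
  have "0 \<in> h ` UNIV" using hb unfolding bij_betw_def by simp
  then obtain j0 where hj0: "h j0 = 0" by auto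
  have hinj: "inj h" using hb bij_betw_imp_inj_on by blast
  define T :: "complex^'n^'n" where
    "T = (\<chi> j i. ac * (if j = i then 1 else 0) + (if j = j0 then (if i = j0 then of_nat ?N * bc else bc) else 0))"
  have ET: "cm E ** Qm j0 = Qm j0 ** T"
    unfolding cmE T_def by (rule Q_sim)
  define P where "P = kron (Qm j0) S"
  define Pi where "Pi = kron (Qim j0) Si"
  have PiP: "Pi ** P = mat 1"
    unfolding P_def Pi_def kron_mult Q_inv SD(2) kron_one ..
  have XP: "(mat z - kron (cm E) Fc) ** P = P ** (mat z - kron T D)"
    by (rule mat_sub_comm) (simp add: P_def kron_mult ET SD(1))
  have "char_det (kron E F) z = det (mat z - kron T D)"
    unfolding char_det_cm cm_kron Fc_def[symmetric]
    by (rule det_similar[OF XP PiP])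
  also have "\<dots> = (\<Prod>r\<in>UNIV. (mat z - kron T D)$r$r)"
  proof (rule det_triangular_rank[where r="\<lambda>(j,k). 2 * h j + (if k = 1 then 0 else 1)"])
    show "inj (\<lambda>(j::'n, k::2). 2 * h j + (if k = 1 then 0 else (1::nat)))"
    proof (rule injI, clarify)
      fix j j' :: 'n and k k' :: 2
      assume eq: "2 * h j + (if k = (1::2) then 0 else (1::nat)) = 2 * h j' + (if k' = 1 then 0 else 1)"
      then have "k = k'" using exhaust_2[of k] exhaust_2[of k'] by auto presburger+
      with eq have "h j = h j'" by auto
      then show "j = j' \<and> k = k'" using hinj \<open>k = k'\<close> by (auto dest: injD)
    qed
  next
    fix r c :: "'n \<times> 2"
    assume lt: "(case c of (j, k) \<Rightarrow> 2 * h j + (if k = 1 then 0 else 1)) < (case r of (j, k) \<Rightarrow> 2 * h j + (if k = 1 then 0 else 1))"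
    obtain j k where r: "r = (j,k)" by (cases r)
    obtain i l where c: "c = (i,l)" by (cases c)
    have lt': "2 * h i + (if l = 1 then 0 else 1) < 2 * h j + (if k = 1 then 0 else (1::nat))"
      using lt r c by simp
    have "T$j$i * D$k$l = 0"
    proof (cases "j = i")
      case True
      then have "l = 1" "k = 2" using lt' exhaust_2[of k] by (auto split: if_splits)
      then show ?thesis using SD(3) by simp
    next
      case False
      have "j \<noteq> j0"
      proof
        assume "j = j0"
        then have "h i \<noteq> 0" using False hj0 hinj by (metis injD)
        then show False using lt' \<open>j = j0\<close> hj0 by (auto split: if_splits)
      qed
      then show ?thesis using False by (simp add: T_def)
    qed
    moreover have "r \<noteq> c" using lt by auto
    ultimately show "(mat z - kron T D)$r$c = 0"
      by (auto simp: r c kron_def mat_def)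
  qed
  also have "\<dots> = (\<Prod>r\<in>UNIV. z - T$fst r$fst r * D$snd r$snd r)"
    by (simp add: kron_def mat_def)
  also have "\<dots> = (\<Prod>j\<in>UNIV. (z - (if j = j0 then 1 else ac)) * (z - (if j = j0 then 1 else ac) * gc))"
  proof -
    have N0: "real ?N \<noteq> 0" by simp
    have Nb: "of_nat ?N * bc = 1 - ac"
      unfolding bc_def ac_def using N0
      by (metis of_real_1 of_real_diff of_real_mult of_real_of_nat_eq nonzero_mult_div_cancel_left times_divide_eq_right)
    have Td: "T$j$j = (if j = j0 then 1 else ac)" for j
      by (simp add: T_def Nb)
    have pj: "(z - t * D$1$1) * (z - t * D$2$2) = (z - t) * (z - t * gc)" for t
    proof -
      have "(z - t * D$1$1) * (z - t * D$2$2) = z*z - t*(D$1$1 + D$2$2)*z + t*t*(D$1$1 * D$2$2)"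
        by (simp add: algebra_simps)
      also have "\<dots> = (z - t) * (z - t * gc)" using SD(4,5) by (simp add: algebra_simps)
      finally show ?thesis .
    qed
    have "(\<Prod>r\<in>UNIV. z - T$fst r$fst r * D$snd r$snd r)
        = (\<Prod>r\<in>UNIV \<times> UNIV. z - T$fst r$fst r * D$snd r$snd r)" by (simp only: UNIV_Times_UNIV)
    also have "\<dots> = (\<Prod>j\<in>UNIV. \<Prod>k\<in>UNIV. z - T$j$j * D$k$k)"
      by (subst prod.cartesian_product) (simp add: case_prod_beta)
    also have "\<dots> = (\<Prod>j\<in>UNIV. (z - T$j$j * D$1$1) * (z - T$j$j * D$2$2))"
      by (simp add: UNIV_2)
    also have "\<dots> = (\<Prod>j\<in>UNIV. (z - (if j = j0 then 1 else ac)) * (z - (if j = j0 then 1 else ac) * gc))"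
      by (simp only: Td pj)
    finally show ?thesis .
  qed
  also have "\<dots> = ((z - 1) * (z - gc)) * (\<Prod>j\<in>UNIV - {j0}. (z - ac) * (z - ac * gc))"
    by (subst prod.remove[of UNIV j0]) (auto intro!: prod.cong)
  also have "\<dots> = ((z - 1) * (z - gc)) * ((z - ac) * (z - ac * gc)) ^ (?N - 1)"
    by (simp add: card_Diff_singleton)
  finally show ?thesis by (simp add: ac_def gc_def power_mult_distrib)
qed



lemma has_derivative_vec_nth_id [derivative_intros]: "((\<lambda>x. x $ i) has_derivative (\<lambda>h. h $ i)) F"
  by (rule bounded_linear_imp_has_derivative[OF bounded_linear_vec_nth])

lemma C1_partial_diff:
  assumes "C1_fun3 f"
  shows "(\<lambda>x::real^2. f (x$1) (x$2) \<alpha>) differentiable (at z)"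
proof -
  obtain D :: "real^3 \<Rightarrow> ((real^3) \<Rightarrow>\<^sub>L real)" where D: "\<And>x. ((\<lambda>y. f (y$1) (y$2) (y$3)) has_derivative blinfun_apply (D x)) (at x)"
    using assms unfolding C1_fun3_def by blast
  define c :: "real^2 \<Rightarrow> real^3" where "c x = (\<chi> i. if i = 1 then x$1 else if i = 2 then x$2 else \<alpha>)" for x
  have "(c has_derivative (\<lambda>h. \<chi> i. if i = 1 then h$1 else if i = 2 then h$2 else 0)) (at z)"
    unfolding c_def
  proof (rule has_derivative_vec_lambda)
    fix i :: 3
    show "((\<lambda>x. if i = 1 then x$1 else if i = 2 then x$2 else \<alpha>) has_derivative (\<lambda>h. if i = 1 then h$1 else if i = 2 then h$2 else 0)) (at z)"
      by (cases "i = 1"; cases "i = 2") (auto intro!: derivative_eq_intros)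
  qed
  then have "((\<lambda>y. f (y$1) (y$2) (y$3)) \<circ> c) differentiable (at z)"
    using D by (meson differentiable_chain_at differentiable_def)
  moreover have "((\<lambda>y. f (y$1) (y$2) (y$3)) \<circ> c) = (\<lambda>x::real^2. f (x$1) (x$2) \<alpha>)"
    by (simp add: c_def fun_eq_iff)
  ultimately show ?thesis by simp
qed

lemma vector2_eq: "(vector [a, b] :: 'a::zero^2) = (\<chi> i. if i = 1 then a else b)"
  by (simp add: vec_eq_iff forall_2)

lemma kinetic_has_derivative:
  assumes "C1_fun3 f" "C1_fun3 g"
  shows "(kinetic_field f g \<alpha> has_derivative frechet_derivative (kinetic_field f g \<alpha>) (at z)) (at z)"
proof -
  obtain f' where f': "((\<lambda>x::real^2. f (x$1) (x$2) \<alpha>) has_derivative f') (at z)"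
    using C1_partial_diff[OF assms(1)] unfolding differentiable_def by blast
  obtain g' where g': "((\<lambda>x::real^2. g (x$1) (x$2) \<alpha>) has_derivative g') (at z)"
    using C1_partial_diff[OF assms(2)] unfolding differentiable_def by blast
  have "((\<lambda>x. \<chi> i::2. if i = 1 then f (x$1) (x$2) \<alpha> else g (x$1) (x$2) \<alpha>) has_derivative (\<lambda>h. \<chi> i. if i = 1 then f' h else g' h)) (at z)"
  proof (rule has_derivative_vec_lambda)
    fix i :: 2
    show "((\<lambda>x. if i = 1 then f (x$1) (x$2) \<alpha> else g (x$1) (x$2) \<alpha>) has_derivative (\<lambda>h. if i = 1 then f' h else g' h)) (at z)"
      using f' g' by (cases "i = 1") auto
  qed
  then have "kinetic_field f g \<alpha> differentiable (at z)"
    unfolding differentiable_def kinetic_field_def vector2_eq by blast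
  then show ?thesis using frechet_derivative_works by blast
qed

definition rowv :: "'n \<Rightarrow> real^('n::finite \<times> 2) \<Rightarrow> real^2" where
  "rowv j x = (\<chi> l. x $ (j, l))"

lemma patch_eq:
  "patch_field \<delta> d0 f g \<alpha> x = (\<chi> r. \<delta> * d0 * (\<Sum>i\<in>UNIV. x$(i, snd r) - x$(fst r, snd r)) + kinetic_field f g \<alpha> (rowv (fst r) x) $ snd r)"
proof -
  have "\<And>k::2. k \<noteq> 1 \<Longrightarrow> k = 2" using exhaust_2 by blast
  then show ?thesis
    unfolding patch_field_def kinetic_field_def rowv_def vector2_eq
    by (auto simp: vec_eq_iff Let_def)
qed

lemma rowv_has_derivative: "(rowv j has_derivative rowv j) F"
  unfolding rowv_def by (rule has_derivative_vec_lambda) (rule has_derivative_vec_nth_id)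

lemma patch_has_derivative:
  fixes \<alpha> :: real and f g :: "real \<Rightarrow> real \<Rightarrow> real \<Rightarrow> real"
  assumes "C1_fun3 f" "C1_fun3 g"
  defines "K' \<equiv> \<lambda>z. frechet_derivative (kinetic_field f g \<alpha>) (at z)"
  shows "(patch_field \<delta> d0 f g \<alpha> has_derivative
          (\<lambda>h. \<chi> r. \<delta> * d0 * (\<Sum>i\<in>UNIV. h$(i, snd r) - h$(fst r, snd r)) + K' (rowv (fst r) x) (rowv (fst r) h) $ snd r)) (at x)"
  unfolding patch_eq[abs_def]
proof (rule has_derivative_vec_lambda)
  fix r :: "'a \<times> 2"
  have K: "((kinetic_field f g \<alpha> \<circ> rowv (fst r)) has_derivative (K' (rowv (fst r) x) \<circ> rowv (fst r))) (at x)"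
    by (rule diff_chain_at[OF rowv_has_derivative]) (unfold K'_def, rule kinetic_has_derivative[OF assms(1,2)])
  have K2: "((\<lambda>x. kinetic_field f g \<alpha> (rowv (fst r) x) $ snd r) has_derivative (\<lambda>h. K' (rowv (fst r) x) (rowv (fst r) h) $ snd r)) (at x)"
    using bounded_linear.has_derivative[OF bounded_linear_vec_nth K] by (simp add: o_def)
  show "((\<lambda>x. \<delta> * d0 * (\<Sum>i\<in>UNIV. x$(i, snd r) - x$(fst r, snd r)) + kinetic_field f g \<alpha> (rowv (fst r) x) $ snd r) has_derivative
        (\<lambda>h. \<delta> * d0 * (\<Sum>i\<in>UNIV. h$(i, snd r) - h$(fst r, snd r)) + K' (rowv (fst r) x) (rowv (fst r) h) $ snd r)) (at x)"
    by (intro has_derivative_add K2 has_derivative_mult_right has_derivative_sum has_derivative_diff has_derivative_vec_nth_id)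
qed

lemma sum_axis_pair:
  "(\<Sum>i'\<in>UNIV. axis (i,l) (1::real) $ (i', k) - axis (i,l) 1 $ (j, k))
     = (if k = l then 1 else 0) - real CARD('n) * (if j = i \<and> k = l then 1 else 0)"
  for i j :: "'n::finite" and k l :: 2
proof -
  have "(\<Sum>i'\<in>UNIV. axis (i,l) (1::real) $ (i', k)) = (if k = l then 1 else 0)"
    by (auto simp: axis_def)
  then show ?thesis by (simp add: sum_subtractf axis_def)
qed

lemma rowv_axis: "rowv j (axis (i,l) (1::real)) = (if i = j then axis l 1 else 0)"
  by (auto simp: rowv_def axis_def vec_eq_iff)

lemma rowv_sync: "rowv j (synchronous \<psi> t) = \<psi> t"
  by (simp add: rowv_def synchronous_def vec_eq_iff)

definition Lmat :: "real \<Rightarrow> real^'n::finite^'n" where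
  "Lmat s = (\<chi> j i. s * (1 - real CARD('n) * (if j = i then 1 else 0)))"

lemma patch_matrix:
  fixes \<alpha> :: real and f g :: "real \<Rightarrow> real \<Rightarrow> real \<Rightarrow> real" and \<psi> :: "real \<Rightarrow> real^2"
  assumes "C1_fun3 f" "C1_fun3 g"
  shows "matrix (frechet_derivative (patch_field \<delta> d0 f g \<alpha> :: real^('n::finite\<times>2) \<Rightarrow> _) (at (synchronous \<psi> t)))
     = kron (Lmat (\<delta> * d0)) (mat 1) + kron (mat 1) (matrix (frechet_derivative (kinetic_field f g \<alpha>) (at (\<psi> t))))"
proof -
  let ?K' = "frechet_derivative (kinetic_field f g \<alpha>) (at (\<psi> t))"
  have lin: "linear ?K'" using kinetic_has_derivative[OF assms] has_derivative_linear by blast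
  note hd = patch_has_derivative[OF assms, where \<alpha>=\<alpha> and \<delta>=\<delta> and ?d0.0=d0 and x="synchronous \<psi> t"]
  have fd: "frechet_derivative (patch_field \<delta> d0 f g \<alpha> :: real^('n\<times>2) \<Rightarrow> _) (at (synchronous \<psi> t))
     = (\<lambda>h. \<chi> r. \<delta> * d0 * (\<Sum>i\<in>UNIV. h$(i, snd r) - h$(fst r, snd r)) + ?K' (rowv (fst r) h) $ snd r)"
    using frechet_derivative_at[OF hd] unfolding rowv_sync by (rule sym)
  have "matrix (frechet_derivative (patch_field \<delta> d0 f g \<alpha> :: real^('n\<times>2) \<Rightarrow> _) (at (synchronous \<psi> t))) $ (j,k) $ (i,l)
     = (kron (Lmat (\<delta> * d0)) (mat 1) + kron (mat 1) (matrix ?K')) $ (j,k) $ (i,l)" for j k i l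
  proof -
    have "matrix (frechet_derivative (patch_field \<delta> d0 f g \<alpha> :: real^('n\<times>2) \<Rightarrow> _) (at (synchronous \<psi> t))) $ (j,k) $ (i,l)
       = \<delta> * d0 * (\<Sum>i'\<in>UNIV. axis (i,l) 1 $ (i', k) - axis (i,l) 1 $ (j, k)) + ?K' (rowv j (axis (i, l) 1)) $ k"
      by (simp add: fd matrix_def)
    also have "\<dots> = (kron (Lmat (\<delta> * d0)) (mat 1) + kron (mat 1) (matrix ?K')) $ (j,k) $ (i,l)"
      unfolding sum_axis_pair rowv_axis
      by (auto simp: kron_def Lmat_def mat_def matrix_def linear_0[OF lin] algebra_simps)
    finally show ?thesis .
  qed
  then show ?thesis by (simp add: vec_eq_iff split_paired_All)
qed



lemma sum_delta_mult: "(\<Sum>m\<in>(UNIV::'n::finite set). c * (if m = i then 1 else 0)) = (c::'a::comm_semiring_1)"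
proof -
  have "(\<Sum>m\<in>UNIV. c * (if m = i then 1 else 0)) = (\<Sum>m\<in>UNIV. if m = i then c else 0)"
    by (rule sum.cong) auto
  then show ?thesis by simp
qed

definition Ef :: "real \<Rightarrow> real \<Rightarrow> real^'n::finite^'n" where
  "Ef s t = (\<chi> j i. exp (- (real CARD('n) * s) * t) * (if j = i then 1 else 0) + (1 - exp (- (real CARD('n) * s) * t)) / real CARD('n))"

lemma Lmat_Ef: "(Lmat s ** (Ef s t :: real^'n::finite^'n)) $ j $ i
   = s * exp (- (real CARD('n) * s) * t) - real CARD('n) * s * exp (- (real CARD('n) * s) * t) * (if j = i then 1 else 0)"
proof -
  let ?N = "real CARD('n)" let ?e = "exp (- (?N * s) * t)"
  have N0: "?N \<noteq> 0" by simp
  have col: "(\<Sum>m\<in>UNIV. (Ef s t :: real^'n^'n) $ m $ i) = 1"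
    using N0 by (simp add: Ef_def sum.distrib sum_delta_mult)
  have "(Lmat s ** (Ef s t :: real^'n^'n)) $ j $ i = (\<Sum>m\<in>UNIV. s * (1 - ?N * (if j = m then 1 else 0)) * (Ef s t :: real^'n^'n) $ m $ i)"
    by (simp add: matrix_matrix_mult_def Lmat_def)
  also have "\<dots> = (\<Sum>m\<in>UNIV. s * (Ef s t :: real^'n^'n) $ m $ i - (if m = j then s * ?N * (Ef s t :: real^'n^'n) $ m $ i else 0))"
    by (rule sum.cong) (auto simp: algebra_simps)
  also have "\<dots> = (\<Sum>m\<in>UNIV. s * (Ef s t :: real^'n^'n) $ m $ i) - s * ?N * (Ef s t :: real^'n^'n) $ j $ i"
    by (simp add: sum_subtractf)
  also have "\<dots> = s - s * ?N * (Ef s t :: real^'n^'n) $ j $ i"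
    by (simp add: col flip: sum_distrib_left)
  also have "\<dots> = s * ?e - ?N * s * ?e * (if j = i then 1 else 0)"
    using N0 by (simp add: Ef_def field_simps)
  finally show ?thesis .
qed

lemma Ef_deriv: "((\<lambda>t. (Ef s t :: real^'n::finite^'n) $ j $ i) has_real_derivative (Lmat s ** (Ef s t :: real^'n^'n)) $ j $ i) (at t)"
  unfolding Lmat_Ef unfolding Ef_def vec_lambda_beta
  by (rule derivative_eq_intros refl | simp add: field_simps)+

lemma has_vector_derivative_vec_lambda:
  assumes "\<And>i. ((\<lambda>t. f t i) has_vector_derivative f' i) F"
  shows "((\<lambda>t. \<chi> i. f t i) has_vector_derivative (\<chi> i. f' i)) F"
proof -
  have "((\<lambda>t. \<chi> i. f t i) has_derivative (\<lambda>h. \<chi> i. h *\<^sub>R f' i)) F"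
    using assms unfolding has_vector_derivative_def by (rule has_derivative_vec_lambda)
  moreover have "(\<lambda>h. \<chi> i. h *\<^sub>R f' i) = (\<lambda>h. h *\<^sub>R (\<chi> i. f' i))" by (simp add: fun_eq_iff vec_eq_iff)
  ultimately show ?thesis unfolding has_vector_derivative_def by simp
qed

lemma matrix_add_rdistrib':
  fixes X Y :: "'a::semiring_1^'k::finite^'j::finite" and Z :: "'a^'m::finite^'k"
  shows "(X + Y) ** Z = X ** Z + Y ** Z"
  by (simp add: matrix_matrix_mult_def vec_eq_iff distrib_right sum.distrib)

lemma Psi_deriv:
  fixes \<Phi> :: "real \<Rightarrow> real^2^2" and A :: "real^2^2"
  assumes "(\<Phi> has_vector_derivative (A ** \<Phi> t)) (at t)"
  shows "((\<lambda>t. kron (Ef s t :: real^'n::finite^'n) (\<Phi> t)) has_vector_derivative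
           ((kron (Lmat s) (mat 1) + kron (mat 1) A) ** kron (Ef s t) (\<Phi> t))) (at t)"
proof -
  have comp: "((\<lambda>t. \<Phi> t $ k $ l) has_real_derivative (A ** \<Phi> t) $ k $ l) (at t)" for k l
    using bounded_linear.has_vector_derivative[OF bounded_linear_compose[OF bounded_linear_vec_nth bounded_linear_vec_nth] assms]
    unfolding has_real_derivative_iff_has_vector_derivative .
  have eq: "(kron (Lmat s) (mat 1) + kron (mat 1) A) ** kron (Ef s t) (\<Phi> t)
      = kron (Lmat s ** (Ef s t :: real^'n^'n)) (\<Phi> t) + kron (Ef s t) (A ** \<Phi> t)"
    by (simp add: matrix_add_rdistrib' kron_mult)
  have "((\<lambda>t. \<chi> r c. (Ef s t :: real^'n^'n) $ fst r $ fst c * \<Phi> t $ snd r $ snd c) has_vector_derivative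
      (\<chi> r c. (Lmat s ** (Ef s t :: real^'n^'n)) $ fst r $ fst c * \<Phi> t $ snd r $ snd c + (Ef s t :: real^'n^'n) $ fst r $ fst c * (A ** \<Phi> t) $ snd r $ snd c)) (at t)"
  proof (intro has_vector_derivative_vec_lambda)
    fix r c :: "'n \<times> 2"
    show "((\<lambda>t. (Ef s t :: real^'n^'n) $ fst r $ fst c * \<Phi> t $ snd r $ snd c) has_vector_derivative
      (Lmat s ** (Ef s t :: real^'n^'n)) $ fst r $ fst c * \<Phi> t $ snd r $ snd c + (Ef s t :: real^'n^'n) $ fst r $ fst c * (A ** \<Phi> t) $ snd r $ snd c) (at t)"
      unfolding has_real_derivative_iff_has_vector_derivative[symmetric]
      using DERIV_mult[OF Ef_deriv[where s=s and j="fst r" and i="fst c" and t=t] comp[of "snd r" "snd c"]]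
      by (simp add: mult.commute)
  qed
  then show ?thesis unfolding eq unfolding kron_def by (simp add: plus_vec_def)
qed



lemma Ef_zero: "Ef s 0 = (mat 1 :: real^'n::finite^'n)"
  by (simp add: Ef_def mat_def vec_eq_iff)

theorem proposition3p3:
  fixes f g :: "real \<Rightarrow> real \<Rightarrow> real \<Rightarrow> real"
    and \<psi> :: "real \<Rightarrow> real^2"
    and d0 \<alpha>0 p \<gamma>t :: real
  assumes n2: "CARD('n::finite) \<ge> 2"
    and d0: "d0 > 0"
    and smooth_f: "C1_fun3 f" and smooth_g: "C1_fun3 g"
    and per: "periodic_solution (kinetic_field f g \<alpha>0) \<psi> p"
    and stable: "floquet_stable (kinetic_field f g \<alpha>0) \<psi> p"
    and mult: "floquet_char (kinetic_field f g \<alpha>0) \<psi> p (\<lambda>z. (z - 1) * (z - complex_of_real \<gamma>t))"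
    and \<gamma>t: "0 < \<gamma>t" "\<gamma>t < 1"
  shows "\<exists>\<delta>1>0. \<forall>\<delta>. 0 < \<delta> \<and> \<delta> < \<delta>1 \<longrightarrow>
           floquet_stable (patch_field \<delta> d0 f g \<alpha>0 :: real^('n \<times> 2) \<Rightarrow> real^('n \<times> 2))
                          (synchronous \<psi>) p"
proof (intro exI[of _ 1] conjI allI impI)
  fix \<delta> :: real
  assume "0 < \<delta> \<and> \<delta> < 1"
  then have \<delta>: "0 < \<delta>" by simp
  have p0: "p > 0" using per unfolding periodic_solution_def by simp
  obtain \<Phi> where fm: "fundamental_matrix (kinetic_field f g \<alpha>0) \<psi> \<Phi>"
    and ch: "\<And>z. char_det (\<Phi> p) z = (z - 1) * (z - complex_of_real \<gamma>t)"
    using mult unfolding floquet_char_def by blast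
  let ?s = "\<delta> * d0"
  let ?N = "CARD('n)"
  define a where "a = exp (- (real ?N * ?s) * p)"
  have Nsp: "real ?N * ?s * p > 0" using \<delta> d0 p0 n2 by simp
  have a01: "0 < a" "a < 1"
    unfolding a_def using Nsp by simp_all
  define \<Psi> where "\<Psi> t = kron (Ef ?s t :: real^'n^'n) (\<Phi> t)" for t
  have fmP: "fundamental_matrix (patch_field \<delta> d0 f g \<alpha>0 :: real^('n \<times> 2) \<Rightarrow> real^('n \<times> 2)) (synchronous \<psi>) \<Psi>"
    unfolding fundamental_matrix_def
  proof (intro conjI allI)
    show "\<Psi> 0 = mat 1" using fm unfolding fundamental_matrix_def \<Psi>_def by (simp add: Ef_zero kron_one)
  next
    fix t
    have "(\<Phi> has_vector_derivative (matrix (frechet_derivative (kinetic_field f g \<alpha>0) (at (\<psi> t))) ** \<Phi> t)) (at t)"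
      using fm unfolding fundamental_matrix_def by blast
    from Psi_deriv[OF this, where s="?s"]
    show "(\<Psi> has_vector_derivative matrix (frechet_derivative (patch_field \<delta> d0 f g \<alpha>0 :: real^('n \<times> 2) \<Rightarrow> real^('n \<times> 2)) (at (synchronous \<psi> t))) ** \<Psi> t) (at t)"
      unfolding patch_matrix[OF smooth_f smooth_g] \<Psi>_def[abs_def] by simp
  qed
  have Ep: "(Ef ?s p :: real^'n^'n) = (\<chi> j i. a * (if j = i then 1 else 0) + (1 - a) / real ?N)"
    by (simp add: Ef_def a_def)
  define q :: "complex poly" where
    "q = [:- complex_of_real \<gamma>t, 1:] * ([:- complex_of_real a, 1:] ^ (?N - 1) * [:- complex_of_real (a * \<gamma>t), 1:] ^ (?N - 1))"
  have chP: "char_det (\<Psi> p) z = (z - 1) * poly q z" for z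
  proof -
    have "poly q z = (z - complex_of_real \<gamma>t) * ((z - complex_of_real a) ^ (?N - 1) * (z - complex_of_real (a * \<gamma>t)) ^ (?N - 1))"
      unfolding q_def poly_mult poly_power by simp
    then show ?thesis unfolding \<Psi>_def char_det_kron[OF Ep ch] by (simp only: mult.assoc)
  qed
  have roots: "cmod z < 1" if "poly q z = 0" for z
  proof -
    have "z = complex_of_real \<gamma>t \<or> z = complex_of_real a \<or> z = complex_of_real (a * \<gamma>t)"
      using that unfolding q_def poly_mult poly_power by (auto simp: algebra_simps)
    moreover have "a * \<gamma>t < 1"
    proof -
      have "a * \<gamma>t < a" using a01 \<gamma>t by simp
      then show ?thesis using a01 by linarith
    qed
    moreover have "a * \<gamma>t > 0" using a01 \<gamma>t by simp
    ultimately show ?thesis using a01 \<gamma>t by (auto simp: norm_mult)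
  qed
  show "floquet_stable (patch_field \<delta> d0 f g \<alpha>0 :: real^('n \<times> 2) \<Rightarrow> real^('n \<times> 2)) (synchronous \<psi>) p"
    unfolding floquet_stable_def floquet_char_def
    using fmP chP roots by blast
qed simp

end
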